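(* Suppose we have $n\ge3$ agents with additive, identical, normalized valuations, provided with a $2$-value prediction of accuracy $\eta<1-\frac{2(1-a^2)}{4+(2n-3)a}$ for some given $a\in(0,1]$; that is, the allowed error between the prediction and the true valuation is $1-\eta>\frac{2(1-a^2)}{4+(2n-3)a}$. Then there is no online algorithm that guarantees an $a$-EFX allocation for all instances with error at most $1-\eta$, even when $T'=T=2n-1$.
   Context: Online fair division with predictions and identical valuations: agents $[n]$; goods $g_1,\dots,g_T$ arrive one per time step; all agents share a true additive normalized valuation $v$ ($v(g_t)\ge0$, $\sum_{t\in[T]}v(g_t)=1$, $v(S)=\sum_{g\in S}v(g)$), and before any arrival the algorithm receives a prediction $p=(p(g_1),\dots,p(g_{T'}))$ (an additive normalized valuation over $T'$ predicted goods) and the accuracy level. A $2$-value prediction takes at most $2$ distinct values. Error $\frac12\sum_{t=1}^{\max\{T,T'\}}|p(g_t)-v(g_t)|$ (missing entries set to $0$); accuracy $\eta$ means the error is at most $1-\eta$. At time $t$, $v(g_t)$ is revealed and $g_t$ must be irrevocably allocated. For $S\ne\emptyset$, $\bar S=S\setminus\{g\}$ with $g\in\arg\max_{g'\in S}v(S\setminus\{g'\})$, $\bar\emptyset=\emptyset$. An allocation is $a$-EFX if $v(A_i)\ge a\cdot v(\bar A_j)$ for all $i,j$. *)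

theory Defs
  imports Complex_Main
begin

text \<open>Goods g_1..g_T are indexed 0..T-1; a valuation/prediction is a real list.
Agents are indexed 0..n-1.\<close>

definition normalized_valuation :: "real list \<Rightarrow> bool" where
  "normalized_valuation v \<longleftrightarrow> (\<forall>x \<in> set v. 0 \<le> x) \<and> sum_list v = 1"

definition two_value_prediction :: "real list \<Rightarrow> bool" where
  "two_value_prediction p \<longleftrightarrow> normalized_valuation p \<and> card (set p) \<le> 2"

definition entry :: "real list \<Rightarrow> nat \<Rightarrow> real" where
  "entry xs t = (if t < length xs then xs ! t else 0)"

definition pred_error :: "real list \<Rightarrow> real list \<Rightarrow> real" where
  "pred_error p v = (1/2) * (\<Sum>t < max (length v) (length p).
       \<bar>entry p t - entry v t\<bar>)"

definition bundle_val :: "real list \<Rightarrow> nat set \<Rightarrow> real" where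
  "bundle_val v S = (\<Sum>t\<in>S. v ! t)"

text \<open>Value of S-bar: S minus a good g maximizing v(S - {g}); empty set gives 0.\<close>
definition bar_val :: "real list \<Rightarrow> nat set \<Rightarrow> real" where
  "bar_val v S = (if S = {} then 0 else Max ((\<lambda>g. bundle_val v (S - {g})) ` S))"

definition is_aEFX :: "nat \<Rightarrow> real \<Rightarrow> real list \<Rightarrow> (nat \<Rightarrow> nat set) \<Rightarrow> bool" where
  "is_aEFX n a v A \<longleftrightarrow> (\<forall>i<n. \<forall>j<n. bundle_val v (A i) \<ge> a * bar_val v (A j))"

text \<open>A deterministic online algorithm receives the prediction and the values of
the goods revealed so far (including the current one) and outputs the agent
receiving the current good.\<close>
type_synonym online_alg = "real list \<Rightarrow> real list \<Rightarrow> nat"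

definition online_alloc :: "online_alg \<Rightarrow> real list \<Rightarrow> real list \<Rightarrow> nat \<Rightarrow> nat set" where
  "online_alloc alg p v i = {t. t < length v \<and> alg p (take (Suc t) v) = i}"

end

theory Submission
  imports Defs
begin


lemma bar_ge: "finite S \<Longrightarrow> g \<in> S \<Longrightarrow> bundle_val w (S - {g}) \<le> bar_val w S"
  unfolding bar_val_def by (auto intro!: Max_ge)

lemma bv_mono: "finite S \<Longrightarrow> T \<subseteq> S \<Longrightarrow> (\<forall>t\<in>S. 0 \<le> w!t) \<Longrightarrow> bundle_val w T \<le> bundle_val w S"
  unfolding bundle_val_def by (rule sum_mono2) auto

lemma bv_single: "bundle_val w {g} = w!g"
  unfolding bundle_val_def by simp

lemma bv_lower: "(\<forall>t\<in>T. c \<le> w!t) \<Longrightarrow> real (card T) * c \<le> bundle_val w T"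
  unfolding bundle_val_def by (rule sum_bounded_below) auto

lemma bv_upper: "(\<forall>t\<in>T. w!t \<le> c) \<Longrightarrow> bundle_val w T \<le> real (card T) * c"
  unfolding bundle_val_def by (rule sum_bounded_above) auto

lemma card_fibers: "finite A \<Longrightarrow> finite B \<Longrightarrow> (\<forall>x\<in>A. f x \<in> B) \<Longrightarrow>
   (\<Sum>y\<in>B. card {x\<in>A. f x = y}) = card A"
proof -
  assume "finite A" "finite B" "\<forall>x\<in>A. f x \<in> B"
  then have "(\<Sum>y\<in>B. sum (\<lambda>_. 1::nat) {x. x\<in>A \<and> f x = y}) = sum (\<lambda>_. 1) A"
    by (intro sum.group) auto
  then show ?thesis by simp
qed

lemma nth_map_upt': "i < k \<Longrightarrow> map f [0..<k] ! i = f i" by simp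

lemma sum_list_map_upt: "sum_list (map f [0..<k]) = (\<Sum>i<k. f i)"
  by (simp add: sum_set_upt_conv_sum_list_nat[symmetric] atLeast0LessThan)



lemma core:
  fixes m :: nat and oA oB :: "nat \<Rightarrow> nat" and wA wB :: "real list"
    and a hi lo Bv x :: real
  assumes oA: "\<And>t. oA t < m+3" and oB: "\<And>t. oB t < m+3"
    and agree: "\<And>t. t < 2*m+3 \<Longrightarrow> oA t = oB t"
    and nn1: "\<forall>t<2*m+5. 0 \<le> wA!t" and nn2: "\<forall>t<2*m+5. 0 \<le> wB!t"
    and hi: "\<forall>t<2*m+3. wA!t \<le> hi" and hi0: "0 \<le> hi"
    and B1: "wA!(2*m+3) = Bv" and B2: "wA!(2*m+4) = Bv" and aB: "a*Bv > 2*hi"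
    and lo: "\<forall>t<2*m+3. lo \<le> wB!t" and lo0: "0 \<le> lo"
    and X: "wB!(2*m+3) = x" and xlt: "x < a*(2*lo)"
    and apos: "0 < a"
    and e1: "is_aEFX (m+3) a wA (\<lambda>j. {t. t < 2*m+5 \<and> oA t = j})"
    and e2: "is_aEFX (m+3) a wB (\<lambda>j. {t. t < 2*m+5 \<and> oB t = j})"
  shows False
proof -
  define n where "n = m+3"
  define A1 where "A1 = (\<lambda>j. {t. t < 2*m+5 \<and> oA t = j})"
  define A2 where "A2 = (\<lambda>j. {t. t < 2*m+5 \<and> oB t = j})"
  define C where "C = (\<lambda>j. {t. t < 2*m+3 \<and> oA t = j})"
  define c where "c = (\<lambda>j. card (C j))"
  have finA1: "finite (A1 j)" for j unfolding A1_def by auto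
  have finA2: "finite (A2 j)" for j unfolding A2_def by auto
  have finC: "finite (C j)" for j unfolding C_def by auto
  have csum: "(\<Sum>j<n. c j) = 2*m+3"
  proof -
    have "(\<Sum>j\<in>{..<n}. card {t\<in>{..<2*m+3}. oA t = j}) = card {..<2*m+3}"
      by (rule card_fibers) (auto simp: n_def oA)
    then show ?thesis unfolding c_def C_def by simp
  qed
  define Emp where "Emp = {j. j < n \<and> c j = 0}"
  have EmpS: "Emp \<subseteq> {..<n}" unfolding Emp_def by auto
  have finEmp: "finite Emp" using EmpS finite_subset by blast
  show False
  proof (cases "card Emp \<ge> 2")
    case True
    have "card (Emp - {oB (2*m+4)}) \<ge> 1"
      using True card_Diff_singleton_if[of Emp "oB (2*m+4)"] finEmp by (auto split: if_splits)
    then have "Emp - {oB (2*m+4)} \<noteq> {}" by (metis card.empty not_one_le_zero)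
    then obtain i where iE: "i \<in> Emp" and ine: "i \<noteq> oB (2*m+4)" by blast
    have ci: "C i = {}" using iE finC unfolding Emp_def c_def by auto
    have sub: "A2 i \<subseteq> {2*m+3}"
    proof
      fix t assume t: "t \<in> A2 i"
      then have tl: "t < 2*m+5" and ot: "oB t = i" unfolding A2_def by auto
      have "\<not> t < 2*m+3"
      proof
        assume "t < 2*m+3"
        then have "t \<in> C i" using agree ot unfolding C_def by auto
        then show False using ci by auto
      qed
      moreover have "t \<noteq> 2*m+4" using ot ine by auto
      ultimately show "t \<in> {2*m+3}" using tl by auto
    qed
    have vi: "bundle_val wB (A2 i) \<le> x"
      using bv_mono[of "{2*m+3}" "A2 i" wB] sub nn2 X nn2[rule_format, of "2*m+3"] by (simp add: bv_single)
    have "\<exists>j<n. c j \<ge> 3"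
    proof (rule ccontr)
      assume "\<not> (\<exists>j<n. c j \<ge> 3)"
      then have le2: "\<forall>j<n. c j \<le> 2" by auto
      have "(\<Sum>j<n. c j) = (\<Sum>j\<in>{..<n} - Emp. c j) + (\<Sum>j\<in>Emp. c j)"
        using sum.subset_diff[OF EmpS, of c] by simp
      also have "(\<Sum>j\<in>Emp. c j) = 0" unfolding Emp_def by simp
      also have "(\<Sum>j\<in>{..<n} - Emp. c j) \<le> card ({..<n} - Emp) * 2"
        using sum_bounded_above[of "{..<n} - Emp" c 2] le2 by auto
      also have "card ({..<n} - Emp) = n - card Emp"
        using card_Diff_subset[OF finEmp EmpS] by simp
      finally have "(\<Sum>j<n. c j) \<le> (n - card Emp) * 2" by simp
      then show False using csum True unfolding n_def by linarith
    qed
    then obtain j where jn: "j < n" and cj: "c j \<ge> 3" by auto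
    have "C j \<noteq> {}" using cj unfolding c_def by auto
    then obtain g where g: "g \<in> C j" by auto
    have CA: "C j \<subseteq> A2 j" using agree unfolding C_def A2_def by auto
    have "card (C j - {g}) \<ge> 2" using cj g finC unfolding c_def by auto
    have lo2: "2 * lo \<le> bundle_val wB (C j - {g})"
    proof -
      have "real (card (C j - {g})) * lo \<le> bundle_val wB (C j - {g})"
        by (rule bv_lower) (use lo in \<open>auto simp: C_def\<close>)
      moreover have "2 * lo \<le> real (card (C j - {g})) * lo"
        using \<open>card (C j - {g}) \<ge> 2\<close> lo0 by (intro mult_right_mono) auto
      ultimately show ?thesis by linarith
    qed
    have "bundle_val wB (C j - {g}) \<le> bundle_val wB (A2 j - {g})"
      using bv_mono[of "A2 j - {g}" "C j - {g}" wB] CA nn2 finA2 unfolding A2_def by auto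
    also have "\<dots> \<le> bar_val wB (A2 j)" using bar_ge[OF finA2] g CA by auto
    finally have "2*lo \<le> bar_val wB (A2 j)" using lo2 by linarith
    moreover have "a * bar_val wB (A2 j) \<le> bundle_val wB (A2 i)"
      using e2 iE jn unfolding is_aEFX_def A2_def Emp_def n_def by auto
    moreover have "a * (2*lo) \<le> a * bar_val wB (A2 j)"
      using \<open>2*lo \<le> bar_val wB (A2 j)\<close> apos by (intro mult_left_mono) auto
    ultimately have "a * (2*lo) \<le> x" using vi by linarith
    then show False using xlt by linarith
  next
    case False
    define j1 where "j1 = oA (2*m+3)"
    define j2 where "j2 = oA (2*m+4)"
    obtain j bb g where jj: "j = j1 \<or> j = j2" and bb: "bb = 2*m+3 \<or> bb = 2*m+4"
      and bbA: "bb \<in> A1 j" and gA: "g \<in> A1 j" and gbb: "g \<noteq> bb"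
      and cond: "j1 = j2 \<or> c j \<ge> 1"
    proof (cases "j1 = j2")
      case True
      show ?thesis
        by (rule that[of j1 "2*m+3" "2*m+4"]) (use True in \<open>auto simp: A1_def j1_def j2_def\<close>)
    next
      case ne: False
      have "\<not> (c j1 = 0 \<and> c j2 = 0)"
      proof
        assume "c j1 = 0 \<and> c j2 = 0"
        then have "{j1, j2} \<subseteq> Emp" unfolding Emp_def j1_def j2_def n_def using oA by auto
        then have "card {j1,j2} \<le> card Emp" using finEmp card_mono by blast
        then show False using ne False by auto
      qed
      then have "c j1 \<noteq> 0 \<or> c j2 \<noteq> 0" by auto
      then show ?thesis
      proof
        assume c1: "c j1 \<noteq> 0"
        then obtain g where "g \<in> C j1" unfolding c_def by (metis card.empty ex_in_conv)
        then show ?thesis using c1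
          by (intro that[of j1 "2*m+3" g]) (auto simp: A1_def C_def j1_def)
      next
        assume c2: "c j2 \<noteq> 0"
        then obtain g where "g \<in> C j2" unfolding c_def by (metis card.empty ex_in_conv)
        then show ?thesis using c2
          by (intro that[of j2 "2*m+4" g]) (auto simp: A1_def C_def j2_def)
      qed
    qed
    have jn: "j < n" using jj oA unfolding j1_def j2_def n_def by auto
    have wbb: "wA!bb = Bv" using bb B1 B2 by auto
    have "Bv = bundle_val wA {bb}" using wbb by (simp add: bv_single)
    also have "\<dots> \<le> bundle_val wA (A1 j - {g})"
      using bv_mono[of "A1 j - {g}" "{bb}" wA] bbA gbb nn1 finA1 unfolding A1_def by auto
    also have "\<dots> \<le> bar_val wA (A1 j)" using bar_ge[OF finA1 gA] .
    finally have barj: "Bv \<le> bar_val wA (A1 j)" .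
    have "\<exists>i<n. i \<noteq> j1 \<and> i \<noteq> j2 \<and> c i \<le> 2"
    proof (rule ccontr)
      assume "\<not> ?thesis"
      then have ge3: "\<forall>i\<in>{..<n} - {j1,j2}. 3 \<le> c i" by auto
      have JS: "{j1,j2} \<subseteq> {..<n}" using oA unfolding j1_def j2_def n_def by auto
      have "(\<Sum>j<n. c j) = (\<Sum>i\<in>{..<n} - {j1,j2}. c i) + (\<Sum>i\<in>{j1,j2}. c i)"
        using sum.subset_diff[OF JS, of c] by simp
      moreover have "card ({..<n} - {j1,j2}) * 3 \<le> (\<Sum>i\<in>{..<n} - {j1,j2}. c i)"
        using sum_bounded_below[of "{..<n} - {j1,j2}" 3 c] ge3 by (simp add: mult.commute)
      moreover have "card ({..<n} - {j1,j2}) = n - card {j1,j2}"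
        using card_Diff_subset[OF _ JS] by simp
      moreover have "j1 \<noteq> j2 \<Longrightarrow> (\<Sum>i\<in>{j1,j2}. c i) \<ge> 1" using cond jj by auto
      ultimately have key: "(n - card {j1,j2}) * 3 + (if j1 = j2 then 0 else 1) \<le> 2*m+3"
        using csum by (cases "j1 = j2") auto
      show False
      proof (cases "j1 = j2")
        case True
        then show False using key unfolding n_def by simp
      next
        case False
        then have "card {j1,j2} = 2" by simp
        then show False using key False unfolding n_def by simp
      qed
    qed
    then obtain i where i_n: "i < n" and ij1: "i \<noteq> j1" and ij2: "i \<noteq> j2" and ci: "c i \<le> 2"
      by auto
    have cases3: "\<And>x. x < 2*m+5 \<Longrightarrow> \<not> x < 2*m+3 \<Longrightarrow> x = 2*m+3 \<or> x = 2*m+4" by arith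
    have AC: "A1 i = C i"
      using ij1 ij2 cases3 unfolding A1_def C_def j1_def j2_def by auto
    have "bundle_val wA (A1 i) \<le> real (card (C i)) * hi"
      unfolding AC by (rule bv_upper) (use hi in \<open>auto simp: C_def\<close>)
    also have "\<dots> \<le> 2 * hi"
    proof -
      have "real (card (C i)) \<le> 2" using ci unfolding c_def by simp
      then show ?thesis using hi0 by (rule mult_right_mono)
    qed
    finally have vi: "bundle_val wA (A1 i) \<le> 2*hi" .
    have "a * bar_val wA (A1 j) \<le> bundle_val wA (A1 i)"
      using e1 i_n jn unfolding is_aEFX_def A1_def n_def by auto
    moreover have "a * Bv \<le> a * bar_val wA (A1 j)" using barj apos by auto
    ultimately show False using vi aB by linarith
  qed
qed



lemma sum5: "(\<Sum>i<2*m+5. f i) = (\<Sum>i<2*m+2. f i) + f (2*m+2) + f (2*m+3) + f (2*(m::nat)+4)"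
proof -
  have "{..<2*m+5} = insert (2*m+4) (insert (2*m+3) (insert (2*m+2) {..<2*m+2}))" by auto
  then show ?thesis by (simp add: algebra_simps)
qed

theorem theorem4p17:
  fixes n :: nat and a \<eta> :: real
  assumes "n \<ge> 3" and "0 < a" and "a \<le> 1"
    and "\<eta> < 1 - 2 * (1 - a^2) / (4 + (2 * real n - 3) * a)"
  shows "\<not> (\<exists>alg :: online_alg.
           (\<forall>p vs. alg p vs < n) \<and>
           (\<forall>p v. two_value_prediction p \<and> normalized_valuation v \<and>
                  length p = 2 * n - 1 \<and> length v = 2 * n - 1 \<and>
                  pred_error p v \<le> 1 - \<eta> \<longrightarrow>
                  is_aEFX n a v (online_alloc alg p v)))"
proof
  assume "\<exists>alg :: online_alg.
           (\<forall>p vs. alg p vs < n) \<and>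
           (\<forall>p v. two_value_prediction p \<and> normalized_valuation v \<and>
                  length p = 2 * n - 1 \<and> length v = 2 * n - 1 \<and>
                  pred_error p v \<le> 1 - \<eta> \<longrightarrow>
                  is_aEFX n a v (online_alloc alg p v))"
  then obtain alg :: online_alg where bound: "\<And>p vs. alg p vs < n"
    and good: "\<And>p v. two_value_prediction p \<Longrightarrow> normalized_valuation v \<Longrightarrow>
                  length p = 2 * n - 1 \<Longrightarrow> length v = 2 * n - 1 \<Longrightarrow>
                  pred_error p v \<le> 1 - \<eta> \<Longrightarrow> is_aEFX n a v (online_alloc alg p v)"
    by blast
  obtain m where nm: "n = m + 3" using assms(1) by (metis add.commute le_Suc_ex)
  have N: "2*n - 1 = 2*m+5" using nm by simp
  define S where "S = 4 + (2 * real n - 3) * a"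
  have S: "S = 4 + (2 * real m + 3) * a" unfolding S_def nm by simp
  have Spos: "S > 0" using S assms(2) by (simp add: add_pos_nonneg)
  define M where "M = (1 - \<eta>) * S"
  have "2 * (1 - a^2) / S < 1 - \<eta>" using assms(4) unfolding S_def by linarith
  then have "2 * (1 - a^2) < (1 - \<eta>) * S" using Spos by (simp add: pos_divide_less_eq)
  then have Mgt: "2 - 2*a^2 < M" unfolding M_def by (simp add: algebra_simps)
  define D where "D = min (M - (2 - 2*a^2)) (min a (2*a^2))"
  have Dpos: "D > 0" using Mgt assms(2) unfolding D_def by simp
  have D1: "D \<le> M - (2 - 2*a^2)" and D2: "D \<le> a" and D3: "D \<le> 2*a^2" unfolding D_def by auto
  define R where "R = D / 12"
  define \<tau> where "\<tau> = 2 - 2*a^2 + D/3"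
  define B where "B = 2 + R/2"
  have a2: "a^2 \<le> 1" using assms(2,3) by (simp add: power_le_one)
  define fp where "fp = (\<lambda>i::nat. (if i < 2*m+3 then a else 2) / S)"
  define f1 where "f1 = (\<lambda>i::nat. (if i < 2*m+2 then a else if i = 2*m+2 then a - R else B) / S)"
  define f2 where "f2 = (\<lambda>i::nat. (if i < 2*m+2 then a else if i = 2*m+2 then a - R
                      else if i = 2*m+3 then 2 - \<tau> else 2 + R + \<tau>) / S)"
  define p where "p = map fp [0..<2*m+5]"
  define v1 where "v1 = map f1 [0..<2*m+5]"
  define v2 where "v2 = map f2 [0..<2*m+5]"
  have Rpos: "R > 0" and Ra: "R \<le> a" unfolding R_def using Dpos D2 by auto
  have tau0: "0 \<le> \<tau>" and tau2: "\<tau> \<le> 2" unfolding \<tau>_def using Dpos D3 a2 by auto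
  have lp: "length p = 2*n-1" and l1: "length v1 = 2*n-1" and l2: "length v2 = 2*n-1"
    unfolding p_def v1_def v2_def N by auto
  have sp: "(\<Sum>i<2*m+2. fp i) = (2*m+2) * (a/S)"
    by (subst sum.cong[of _ _ fp "\<lambda>_. a/S"]) (auto simp: fp_def)
  have s1: "(\<Sum>i<2*m+2. f1 i) = (2*m+2) * (a/S)"
    by (subst sum.cong[of _ _ f1 "\<lambda>_. a/S"]) (auto simp: f1_def)
  have s2: "(\<Sum>i<2*m+2. f2 i) = (2*m+2) * (a/S)"
    by (subst sum.cong[of _ _ f2 "\<lambda>_. a/S"]) (auto simp: f2_def)
  have d1: "(\<Sum>i<2*m+2. \<bar>fp i - f1 i\<bar>) = 0"
    by (rule sum.neutral) (auto simp: fp_def f1_def)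
  have d2: "(\<Sum>i<2*m+2. \<bar>fp i - f2 i\<bar>) = 0"
    by (rule sum.neutral) (auto simp: fp_def f2_def)
  have tvp: "two_value_prediction p"
  proof -
    have "set p \<subseteq> {a/S, 2/S}" unfolding p_def fp_def by auto
    then have "card (set p) \<le> card {a/S, 2/S}" by (intro card_mono) auto
    also have "\<dots> \<le> 2" by (rule card_insert_le_m1) auto
    finally have c: "card (set p) \<le> 2" .
    have "sum_list p = (\<Sum>i<2*m+5. fp i)" unfolding p_def by (rule sum_list_map_upt)
    also have "\<dots> = (2*m+2) * (a/S) + a/S + 2/S + 2/S" unfolding sum5 sp by (simp add: fp_def)
    also have "\<dots> = ((2*real m+3)*a + 4) / S" using Spos by (simp add: field_simps)
    also have "\<dots> = 1" using Spos S by simp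
    finally have "sum_list p = 1" .
    moreover have "\<forall>x\<in>set p. 0 \<le> x" unfolding p_def fp_def using Spos assms(2) by auto
    ultimately show ?thesis using c unfolding two_value_prediction_def normalized_valuation_def by auto
  qed
  have nv1: "normalized_valuation v1"
  proof -
    have "sum_list v1 = (\<Sum>i<2*m+5. f1 i)" unfolding v1_def by (rule sum_list_map_upt)
    also have "\<dots> = (2*m+2) * (a/S) + (a-R)/S + B/S + B/S" unfolding sum5 s1 by (simp add: f1_def)
    also have "\<dots> = ((2*real m+3)*a + 4) / S" using Spos unfolding B_def by (simp add: field_simps)
    also have "\<dots> = 1" using Spos S by simp
    finally have "sum_list v1 = 1" .
    moreover have "\<forall>x\<in>set v1. 0 \<le> x" unfolding v1_def f1_def B_def using Spos assms(2) Ra Rpos by auto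
    ultimately show ?thesis unfolding normalized_valuation_def by auto
  qed
  have nv2: "normalized_valuation v2"
  proof -
    have "sum_list v2 = (\<Sum>i<2*m+5. f2 i)" unfolding v2_def by (rule sum_list_map_upt)
    also have "\<dots> = (2*m+2) * (a/S) + (a-R)/S + (2-\<tau>)/S + (2+R+\<tau>)/S" unfolding sum5 s2 by (simp add: f2_def)
    also have "\<dots> = ((2*real m+3)*a + 4) / S" using Spos by (simp add: field_simps)
    also have "\<dots> = 1" using Spos S by simp
    finally have "sum_list v2 = 1" .
    moreover have "\<forall>x\<in>set v2. 0 \<le> x" unfolding v2_def f2_def using Spos assms(2) Ra Rpos tau0 tau2 by auto
    ultimately show ?thesis unfolding normalized_valuation_def by auto
  qed
  have ent: "\<And>f t. t < 2*m+5 \<Longrightarrow> entry (map f [0..<2*m+5]) t = f t" unfolding entry_def by simp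
  have pe1: "pred_error p v1 \<le> 1 - \<eta>"
  proof -
    have mx: "max (length v1) (length p) = 2*m+5" using lp l1 N by simp
    have cg: "(\<Sum>t<2*m+5. \<bar>entry p t - entry v1 t\<bar>) = (\<Sum>t<2*m+5. \<bar>fp t - f1 t\<bar>)"
      by (rule sum.cong) (auto simp: p_def v1_def entry_def)
    have "pred_error p v1 = (1/2) * (\<Sum>t<2*m+5. \<bar>fp t - f1 t\<bar>)"
      unfolding pred_error_def mx cg by simp
    also have "\<dots> = (1/2) * (\<bar>a/S - (a-R)/S\<bar> + \<bar>2/S - B/S\<bar> + \<bar>2/S - B/S\<bar>)"
      unfolding sum5 d1 by (simp add: fp_def f1_def)
    also have "\<dots> = R / S" using Spos Rpos unfolding B_def by (simp add: field_simps abs_if)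
    also have "\<dots> \<le> M / S" using Spos D1 Dpos a2 unfolding R_def
      by (intro divide_right_mono) auto
    also have "\<dots> = 1 - \<eta>" unfolding M_def using Spos by simp
    finally show ?thesis .
  qed
  have pe2: "pred_error p v2 \<le> 1 - \<eta>"
  proof -
    have mx: "max (length v2) (length p) = 2*m+5" using lp l2 N by simp
    have cg: "(\<Sum>t<2*m+5. \<bar>entry p t - entry v2 t\<bar>) = (\<Sum>t<2*m+5. \<bar>fp t - f2 t\<bar>)"
      by (rule sum.cong) (auto simp: p_def v2_def entry_def)
    have "pred_error p v2 = (1/2) * (\<Sum>t<2*m+5. \<bar>fp t - f2 t\<bar>)"
      unfolding pred_error_def mx cg by simp
    also have "\<dots> = (1/2) * (\<bar>a/S - (a-R)/S\<bar> + \<bar>2/S - (2-\<tau>)/S\<bar> + \<bar>2/S - (2+R+\<tau>)/S\<bar>)"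
      unfolding sum5 d2 by (simp add: fp_def f2_def)
    also have "\<dots> = (R + \<tau>) / S" using Spos Rpos tau0 by (simp add: field_simps abs_if)
    also have "\<dots> \<le> M / S" using Spos D1 Dpos a2 unfolding R_def \<tau>_def
      by (intro divide_right_mono) auto
    also have "\<dots> = 1 - \<eta>" unfolding M_def using Spos by simp
    finally show ?thesis .
  qed
  have E1: "is_aEFX n a v1 (online_alloc alg p v1)" using good tvp nv1 lp l1 pe1 by blast
  have E2: "is_aEFX n a v2 (online_alloc alg p v2)" using good tvp nv2 lp l2 pe2 by blast
  define own1 where "own1 = (\<lambda>t. alg p (take (Suc t) v1))"
  define own2 where "own2 = (\<lambda>t. alg p (take (Suc t) v2))"
  have OA1: "online_alloc alg p v1 = (\<lambda>j. {t. t < 2*m+5 \<and> own1 t = j})"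
    unfolding online_alloc_def own1_def using l1 N by simp
  have OA2: "online_alloc alg p v2 = (\<lambda>j. {t. t < 2*m+5 \<and> own2 t = j})"
    unfolding online_alloc_def own2_def using l2 N by simp
  have agree: "own1 t = own2 t" if t: "t < 2*m+3" for t
  proof -
    have "take (Suc t) v1 = map f1 [0..<Suc t]" unfolding v1_def using t by (simp add: take_map)
    also have "\<dots> = map f2 [0..<Suc t]" using t by (intro map_cong) (auto simp: f1_def f2_def)
    also have "\<dots> = take (Suc t) v2" unfolding v2_def using t by (simp add: take_map)
    finally show ?thesis unfolding own1_def own2_def by simp
  qed
  show False
  proof (rule core[where m=m and oA=own1 and oB=own2 and wA=v1 and wB=v2 and a=a and hi="a/S"
        and Bv="B/S" and lo="(a-R)/S" and x="(2-\<tau>)/S"])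
    show "\<And>t. own1 t < m+3" unfolding own1_def using bound nm by simp
    show "\<And>t. own2 t < m+3" unfolding own2_def using bound nm by simp
    show "\<And>t. t < 2*m+3 \<Longrightarrow> own1 t = own2 t" by (rule agree)
    show "\<forall>t<2*m+5. 0 \<le> v1!t" unfolding v1_def f1_def B_def using Spos assms(2) Ra Rpos by auto
    show "\<forall>t<2*m+5. 0 \<le> v2!t" unfolding v2_def f2_def using Spos assms(2) Ra Rpos tau0 tau2 by auto
    show "\<forall>t<2*m+3. v1!t \<le> a/S" unfolding v1_def f1_def using Spos Rpos
      by (auto simp: divide_right_mono)
    show "0 \<le> a/S" using Spos assms(2) by simp
    show "v1!(2*m+3) = B/S" unfolding v1_def f1_def by simp
    show "v1!(2*m+4) = B/S" unfolding v1_def f1_def by simp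
    show "a * (B/S) > 2 * (a/S)" unfolding B_def using Spos Rpos assms(2)
      by (simp add: field_simps)
    show "\<forall>t<2*m+3. (a-R)/S \<le> v2!t" unfolding v2_def f2_def using Spos Rpos
      by (auto simp: divide_right_mono)
    show "0 \<le> (a-R)/S" using Spos Ra by simp
    show "v2!(2*m+3) = (2-\<tau>)/S" unfolding v2_def f2_def by simp
    show "(2-\<tau>)/S < a * (2 * ((a-R)/S))"
    proof -
      have "2 - \<tau> < a * (2 * (a - R))" unfolding \<tau>_def R_def using Dpos assms(2,3)
        by (simp add: algebra_simps power2_eq_square)
      then have "(2 - \<tau>)/S < (a * (2 * (a - R)))/S" using Spos by (rule divide_strict_right_mono)
      moreover have "a * (2 * ((a-R)/S)) = (a * (2 * (a - R)))/S" by simp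
      ultimately show ?thesis by simp
    qed
    show "0 < a" by (rule assms(2))
    show "is_aEFX (m+3) a v1 (\<lambda>j. {t. t < 2*m+5 \<and> own1 t = j})" using E1 OA1 nm by simp
    show "is_aEFX (m+3) a v2 (\<lambda>j. {t. t < 2*m+5 \<and> own2 t = j})" using E2 OA2 nm by simp
  qed
qed


end
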